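(* Let $\mathcal{C}$ be an $(n,k)$ binary linear code with $n\ge2$, $k\ge1$, generator matrix $\mathbf{G}$ (any representation), information functions $\tilde e_g$, coefficients $a_t$, check-node EXIT function $I_E(p)$ and quantity $\Delta_{n-2}$ as defined in the context. Then: (i) $\frac{\mathrm{d}I_E}{\mathrm{d}p}\big|_{p=0}=\frac{(n-1)a_0-a_1}{n}$; (ii) $a_0=0$ if and only if $d_{\min}(\mathcal{C})\ge2$; (iii) if $d_{\min}(\mathcal{C})\ge 2$, then $a_1=2\Delta_{n-2}$ and hence $\frac{\mathrm{d}I_E}{\mathrm{d}p}\big|_{p=0}=-\frac{2}{n}\Delta_{n-2}$; moreover $a_1=\Delta_{n-2}=0$ if $d_{\min}(\mathcal{C})\ge3$, while $\Delta_{n-2}>0$ (so $a_1\neq0$) if $d_{\min}(\mathcal{C})=2$.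
   Context: For a $k\times n$ generator matrix $\mathbf{G}$ (rank $k$) of a binary $(n,k)$ code and $g\in\{0,\dots,n\}$, the un-normalized information function is $\tilde e_g=\sum_{S}\operatorname{rank}(\mathbf{G}_S)$, the sum over all $g$-element sets $S$ of column indices, $\mathbf{G}_S$ the $k\times g$ submatrix of those columns (rank of empty matrix is $0$). Set $a_t=(n-t)\tilde e_{n-t}-(t+1)\tilde e_{n-t-1}$ for $t=0,\dots,n-1$, and define the check-node EXIT function on the binary erasure channel $I_E(p)=1-\frac1n\sum_{t=0}^{n-1}a_t\,p^t(1-p)^{n-t-1}$, $p\in[0,1]$. Define $\Delta_{n-2}=\sum_{S}\big(k-\operatorname{rank}(\mathbf{G}_S)\big)$, the sum over all $(n-2)$-element sets $S$ of column indices. $d_{\min}$ denotes minimum Hamming distance. *)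

theory Defs
  imports "HOL-Library.Z2" "Jordan_Normal_Form.DL_Rank_Submatrix"
begin

text \<open>Binary matrices are Jordan_Normal_Form matrices over the field bit = GF(2).
  A generator matrix G of an (n,k) code is a k x n matrix (G in carrier_mat k n).\<close>

definition mrank :: "bit mat \<Rightarrow> nat" where
  "mrank A = vec_space.rank (dim_row A) A"

definition colsub :: "bit mat \<Rightarrow> nat set \<Rightarrow> bit mat" where
  "colsub G S = submatrix G UNIV S"

definition info_fun :: "bit mat \<Rightarrow> nat \<Rightarrow> nat" where
  "info_fun G g = (\<Sum>S \<in> {S. S \<subseteq> {0..<dim_col G} \<and> card S = g}. mrank (colsub G S))"

definition coef_a :: "bit mat \<Rightarrow> nat \<Rightarrow> int" where
  "coef_a G t = int (dim_col G - t) * int (info_fun G (dim_col G - t))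
              - int (t + 1) * int (info_fun G (dim_col G - t - 1))"

definition exit_IE :: "bit mat \<Rightarrow> real \<Rightarrow> real" where
  "exit_IE G p = 1 - (1 / real (dim_col G)) *
     (\<Sum>t<dim_col G. real_of_int (coef_a G t) * p ^ t * (1 - p) ^ (dim_col G - t - 1))"

definition Delta :: "bit mat \<Rightarrow> nat" where
  "Delta G = (\<Sum>S \<in> {S. S \<subseteq> {0..<dim_col G} \<and> card S = dim_col G - 2}.
                 dim_row G - mrank (colsub G S))"

definition code :: "bit mat \<Rightarrow> bit vec set" where
  "code G = {transpose_mat G *\<^sub>v x | x. x \<in> carrier_vec (dim_row G)}"

definition hweight :: "bit vec \<Rightarrow> nat" where
  "hweight c = card {j. j < dim_vec c \<and> c $ j \<noteq> 0}"

definition dmin :: "bit mat \<Rightarrow> nat" where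
  "dmin G = Min {hweight c | c. c \<in> code G \<and> c \<noteq> 0\<^sub>v (dim_col G)}"

end

theory Submission imports Defs "Jordan_Normal_Form.Matrix_Kernel" begin

lemma (in vec_space) orth_span:
  assumes T: "T \<subseteq> carrier_vec n" and x: "x \<in> carrier_vec n"
    and o: "\<forall>t\<in>T. t \<bullet> x = 0"
  shows "\<forall>y\<in>span T. y \<bullet> x = 0"
proof -
  define M where "M = mat_of_rows n [x]"
  have M: "M \<in> carrier_mat 1 n" unfolding M_def by auto
  have sub: "submodule class_ring (mat_kernel M) V"
    apply unfold_locales
    using M
    apply (auto simp: class_ring_simps mat_kernel_def mult_add_distrib_mat_vec[OF M] mult_mat_vec[OF M])
    apply (rule eq_vecI) using M apply auto
    done
  have xx: "vec n (($) x) = x" by (rule eq_vecI) (use x in auto)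
  have "T \<subseteq> mat_kernel M"
  proof
    fix t assume t: "t \<in> T"
    have tc: "t \<in> carrier_vec n" using t T by auto
    have "M *\<^sub>v t = 0\<^sub>v 1"
      using tc x o t M unfolding M_def
      by (auto intro!: eq_vecI simp: mat_of_rows_def xx comm_scalar_prod[of x n t])
    then show "t \<in> mat_kernel M" using mat_kernelI[OF M tc] by auto
  qed
  then have "span T \<subseteq> mat_kernel M" using span_is_subset[OF _ sub] by auto
  then show ?thesis
  proof (intro ballI)
    fix y assume "y \<in> span T" 
    then have "y \<in> mat_kernel M" using \<open>span T \<subseteq> mat_kernel M\<close> by auto
    then have y: "y \<in> carrier_vec n" "M *\<^sub>v y = 0\<^sub>v 1" using mat_kernelD[OF M] by auto
    then have "(M *\<^sub>v y) $ 0 = 0" by auto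
    then have "x \<bullet> y = 0" unfolding M_def by (simp add: mat_of_rows_def xx)
    then show "y \<bullet> x = 0" using comm_scalar_prod[OF y(1) x] by simp
  qed
qed

lemma (in vec_space) max_indpt_exists:
  assumes A: "A \<in> carrier_mat n m"
  obtains S where "maximal S (\<lambda>T. T \<subseteq> set (cols A) \<and> lin_indpt T)" "finite S" "rank A = card S"
proof -
  have "lin_indpt {}" unfolding lin_dep_def by auto
  then obtain S where S: "maximal S (\<lambda>T. T \<subseteq> set (cols A) \<and> lin_indpt T)" "finite S"
    using maximal_exists_superset[of "set (cols A)" "(\<lambda>T. T \<subseteq> set (cols A) \<and> lin_indpt T)" "{}"]
    by auto
  then show ?thesis using that rank_card_indpt[OF A S(1)] by auto
qed


lemma (in vec_space) rank_le_dim: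
  assumes A: "A \<in> carrier_mat n m"
  shows "rank A \<le> n"
proof -
  obtain S where S: "maximal S (\<lambda>T. T \<subseteq> set (cols A) \<and> lin_indpt T)" "finite S" "rank A = card S"
    using max_indpt_exists[OF A] by blast
  have S1: "S \<subseteq> set (cols A)" using S(1) unfolding maximal_def by blast
  have "set (cols A) \<subseteq> carrier_vec n" using cols_dim[of A] A by simp
  then have sub: "S \<subseteq> carrier_vec n" using S1 by blast
  have li: "lin_indpt S" using S(1) unfolding maximal_def by blast
  have "card S \<le> dim" by (rule li_le_dim(2)[OF fin_dim _ li]) (simp add: sub)
  then show ?thesis using S(3) dim_is_n by simp
qed


lemma (in vec_space) full_rank_orth:
  assumes A: "A \<in> carrier_mat n m" and r: "rank A = n" and x: "x \<in> carrier_vec n"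
    and o: "\<forall>j<m. col A j \<bullet> x = 0"
  shows "x = 0\<^sub>v n"
proof -
  obtain S where S: "maximal S (\<lambda>T. T \<subseteq> set (cols A) \<and> lin_indpt T)" "finite S" "rank A = card S"
    using max_indpt_exists[OF A] by blast
  have S1: "S \<subseteq> set (cols A)" using S(1) unfolding maximal_def by blast
  have "set (cols A) \<subseteq> carrier_vec n" using cols_dim[of A] A by simp
  then have sub: "S \<subseteq> carrier_vec n" using S1 by blast
  have li: "lin_indpt S" using S(1) unfolding maximal_def by blast
  have "dim \<le> card S" using S(3) r dim_is_n by simp
  then have "basis S" by (intro dim_li_is_basis[OF fin_dim S(2) _ li]) (simp add: sub)
  then have sp: "span S = carrier_vec n" unfolding basis_def by simp
  have "\<forall>t\<in>S. t \<bullet> x = 0"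
  proof
    fix t assume "t \<in> S"
    then have "t \<in> set (cols A)" using S1 by blast
    then obtain j where "j < m" "t = col A j" using A unfolding cols_def by auto
    then show "t \<bullet> x = 0" using o by blast
  qed
  then have o2: "\<forall>y\<in>span S. y \<bullet> x = 0" using orth_span[OF sub x] by blast
  show ?thesis
  proof (rule eq_vecI)
    fix i assume "i < dim_vec (0\<^sub>v n)"
    then have i: "i < n" by simp
    have "unit_vec n i \<in> span S" using sp i by simp
    then have "unit_vec n i \<bullet> x = 0" using o2 by blast
    then show "x $ i = 0\<^sub>v n $ i" using i x by (simp add: scalar_prod_left_unit)
  next
    show "dim_vec x = dim_vec (0\<^sub>v n)" using x by simp
  qed
qed

lemma (in vec_space) low_rank_orth:
  assumes A: "A \<in> carrier_mat n m" and r: "rank A < n"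
  shows "\<exists>x\<in>carrier_vec n. x \<noteq> 0\<^sub>v n \<and> (\<forall>j<m. col A j \<bullet> x = 0)"
proof -
  obtain S where S: "maximal S (\<lambda>T. T \<subseteq> set (cols A) \<and> lin_indpt T)" "finite S" "rank A = card S"
    using max_indpt_exists[OF A] by blast
  have S1: "S \<subseteq> set (cols A)" using S(1) unfolding maximal_def by blast
  have colsc: "set (cols A) \<subseteq> carrier_vec n" using cols_dim[of A] A by simp
  then have sub: "S \<subseteq> carrier_vec n" using S1 by blast
  have li: "lin_indpt S" using S(1) unfolding maximal_def by blast
  obtain ss where ss: "set ss = S" "distinct ss" using finite_distinct_list[OF S(2)] by blast
  have lss: "length ss < n" using ss S(3) r distinct_card by fastforce
  define c where "c i = (if i < length ss then ss ! i else 0\<^sub>v n)" for i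
  have cc: "c \<in> {0..<n} \<rightarrow> carrier_vec n" using sub ss nth_mem unfolding c_def by fastforce
  define P where "P = mat\<^sub>r n n (\<lambda>i. if i = n - 1 then 0\<^sub>v n else c i)"
  have P: "P \<in> carrier_mat n n" unfolding P_def by simp
  have "det P = 0" unfolding P_def by (rule det_row_0[OF _ cc]) (use lss in simp)
  then obtain v where v: "v \<in> carrier_vec n" "v \<noteq> 0\<^sub>v n" "P *\<^sub>v v = 0\<^sub>v n"
    using det_0_iff_vec_prod_zero[OF P] by blast
  have oS: "\<forall>t\<in>S. t \<bullet> v = 0"
  proof
    fix t assume "t \<in> S"
    then obtain i where i: "i < length ss" "t = ss ! i" using ss by (metis in_set_conv_nth)
    have inn: "i < n" "i \<noteq> n - 1" using i lss by auto
    have tc: "t \<in> carrier_vec n" using \<open>t \<in> S\<close> sub by blast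
    have "(P *\<^sub>v v) $ i = 0" using v inn by simp
    moreover have "(P *\<^sub>v v) $ i = row P i \<bullet> v" using P inn by simp
    moreover have "row P i = t" unfolding P_def using inn i tc c_def
      by (intro eq_vecI) (auto simp: row_def)
    ultimately show "t \<bullet> v = 0" by simp
  qed
  have cs: "set (cols A) \<subseteq> span S"
  proof
    fix w assume w: "w \<in> set (cols A)"
    show "w \<in> span S"
    proof (cases "w \<in> S")
      case True then show ?thesis using in_own_span[OF sub] by blast
    next
      case False
      have "insert w S \<subseteq> set (cols A)" using w S1 by blast
      moreover have "insert w S \<noteq> S" using False by blast
      ultimately have "\<not> lin_indpt (insert w S)" using S(1) unfolding maximal_def by blast
      then have "lin_dep (S \<union> {w})" by simp
      then show ?thesis using lin_dep_iff_in_span[OF sub li _ False] w colsc by blast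
    qed
  qed
  have "\<forall>y\<in>span S. y \<bullet> v = 0" using orth_span[OF sub v(1) oS] .
  then have "\<forall>j<m. col A j \<bullet> v = 0" using cs A unfolding cols_def by fastforce
  then show ?thesis using v by blast
qed

lemma term_deriv:
  fixes e t :: nat
  shows "((\<lambda>p::real. p ^ t * (1 - p) ^ e) has_real_derivative
      (if t = 0 then - real e else if t = 1 then 1 else 0)) (at 0)"
proof -
  have "((\<lambda>p::real. p ^ t * (1 - p) ^ e) has_real_derivative
      (real t * 0 ^ (t - 1) * (1 - 0) ^ e + 0 ^ t * (real e * (1 - 0) ^ (e - 1) * (0 - 1)))) (at 0)"
    by (intro derivative_eq_intros refl) auto
  moreover have "real t * 0 ^ (t - 1) * (1 - 0) ^ e + 0 ^ t * (real e * (1 - 0) ^ (e - 1) * (0 - 1))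
      = (if t = 0 then - real e else if t = 1 then (1::real) else 0)"
    by (cases t; cases "t - 1") auto
  ultimately show ?thesis by simp
qed

lemma deriv_main:
  fixes c :: "nat \<Rightarrow> real" and n :: nat
  assumes n: "n \<ge> 2"
  shows "((\<lambda>p. 1 - (1 / real n) * (\<Sum>t<n. c t * p ^ t * (1 - p) ^ (n - t - 1)))
     has_real_derivative ((real n - 1) * c 0 - c 1) / real n) (at 0)"
proof -
  have d: "((\<lambda>p. (\<Sum>t<n. c t * p ^ t * (1 - p) ^ (n - t - 1))) has_real_derivative
      (\<Sum>t<n. c t * (if t = 0 then - real (n - t - 1) else if t = 1 then 1 else 0))) (at 0)"
  proof (rule DERIV_sum)
    fix t assume "t \<in> {..<n}"
    show "((\<lambda>p. c t * p ^ t * (1 - p) ^ (n - t - 1)) has_real_derivative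
      c t * (if t = 0 then - real (n - t - 1) else if t = 1 then 1 else 0)) (at 0)"
      using DERIV_cmult[OF term_deriv[of t "n - t - 1"], of "c t"] by (simp add: mult.assoc)
  qed
  have "(\<Sum>t<n. c t * (if t = 0 then - real (n - t - 1) else if t = 1 then 1 else 0))
      = (\<Sum>t<n. (if t = 0 then - (c 0 * (real n - 1)) else 0) + (if t = 1 then c 1 else 0))"
    using n by (intro sum.cong) (auto simp: of_nat_diff right_diff_distrib)
  also have "\<dots> = (\<Sum>t<n. (if t = 0 then - (c 0 * (real n - 1)) else 0)) + (\<Sum>t<n. (if t = 1 then c 1 else 0))"
    by (rule sum.distrib)
  also have "\<dots> = - (c 0 * (real n - 1)) + c 1"
    using n by (simp only: sum.delta finite_lessThan lessThan_iff) simp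
  finally have e: "(\<Sum>t<n. c t * (if t = 0 then - real (n - t - 1) else if t = 1 then 1 else 0))
      = - (c 0 * (real n - 1)) + c 1" .
  have "((\<lambda>p. 1 - (1 / real n) * (\<Sum>t<n. c t * p ^ t * (1 - p) ^ (n - t - 1)))
     has_real_derivative 0 - (1 / real n) * (- (c 0 * (real n - 1)) + c 1)) (at 0)"
    by (rule DERIV_diff[OF DERIV_const DERIV_cmult[OF d[unfolded e]]])
  moreover have "0 - (1 / real n) * (- (c 0 * (real n - 1)) + c 1) = ((real n - 1) * c 0 - c 1) / real n"
    using n by (simp add: field_simps)
  ultimately show ?thesis by simp
qed

lemma extend_subset:
  assumes U: "finite U" and T: "T \<subseteq> U" and m1: "card T \<le> m" and m2: "m \<le> card U"
  shows "\<exists>T'. T \<subseteq> T' \<and> T' \<subseteq> U \<and> card T' = m"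
proof -
  have fT: "finite T" using T U finite_subset by blast
  have "card (U - T) = card U - card T" using card_Diff_subset[OF fT T] .
  then have "m - card T \<le> card (U - T)" using m2 by simp
  then obtain R where R: "R \<subseteq> U - T" "card R = m - card T" "finite R"
    using obtain_subset_with_card_n by metis
  have "card (T \<union> R) = card T + card R" using R fT by (intro card_Un_disjoint) auto
  then have "card (T \<union> R) = m" using R m1 by simp
  then show ?thesis using R T by (intro exI[of _ "T \<union> R"]) auto
qed

lemma set_colsub_S: "S \<subseteq> {0..<n} \<Longrightarrow> {j. j < n \<and> j \<in> S} = S" by auto

lemma colsub_carrier:
  assumes G: "G \<in> carrier_mat k n" and S: "S \<subseteq> {0..<n}"
  shows "colsub G S \<in> carrier_mat k (card S)"
  using G set_colsub_S[OF S] unfolding colsub_def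
  by (intro carrier_matI) (auto simp: dim_submatrix)

lemma col_colsub:
  assumes G: "G \<in> carrier_mat k n" and S: "S \<subseteq> {0..<n}" and l: "l < card S"
  shows "col (colsub G S) l = col G (pick S l)"
proof -
  have CS: "colsub G S \<in> carrier_mat k (card S)" using colsub_carrier[OF G S] .
  have ps: "pick S l \<in> S" using pick_in_set l by blast
  then have pn: "pick S l < n" using S by auto
  show ?thesis
  proof (rule eq_vecI)
    fix i assume "i < dim_vec (col G (pick S l))"
    then have i: "i < k" using G by simp
    have "colsub G S $$ (i, l) = G $$ (pick UNIV i, pick S l)" unfolding colsub_def
      using G set_colsub_S[OF S] i l by (intro submatrix_index) auto
    then show "col (colsub G S) l $ i = col G (pick S l) $ i"
      using CS G i l pn by (simp add: pick_UNIV)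
  qed (use CS G in simp)
qed

lemma orth_colsub:
  assumes G: "G \<in> carrier_mat k n" and S: "S \<subseteq> {0..<n}"
  shows "(\<forall>l<card S. col (colsub G S) l \<bullet> x = 0) \<longleftrightarrow> (\<forall>j\<in>S. col G j \<bullet> x = 0)"
proof
  assume h: "\<forall>l<card S. col (colsub G S) l \<bullet> x = 0"
  show "\<forall>j\<in>S. col G j \<bullet> x = 0"
  proof
    fix j assume j: "j \<in> S"
    have fS: "finite S" using S finite_subset by blast
    have "{a \<in> S. a < j} \<subset> S" using j by auto
    then have l: "card {a \<in> S. a < j} < card S" using fS psubset_card_mono by blast
    have "pick S (card {a \<in> S. a < j}) = j" using pick_card_in_set[OF j] .
    then show "col G j \<bullet> x = 0" using h l col_colsub[OF G S l] by metis
  qed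
next
  assume h: "\<forall>j\<in>S. col G j \<bullet> x = 0"
  show "\<forall>l<card S. col (colsub G S) l \<bullet> x = 0"
  proof (intro allI impI)
    fix l assume l: "l < card S"
    have "pick S l \<in> S" using pick_in_set l by blast
    then show "col (colsub G S) l \<bullet> x = 0" using h col_colsub[OF G S l] by simp
  qed
qed

lemma mrank_colsub:
  assumes G: "G \<in> carrier_mat k n" and S: "S \<subseteq> {0..<n}"
  shows "mrank (colsub G S) \<le> k"
    and "mrank (colsub G S) < k \<longleftrightarrow> (\<exists>x\<in>carrier_vec k. x \<noteq> 0\<^sub>v k \<and> (\<forall>j\<in>S. col G j \<bullet> x = 0))"
proof -
  have CS: "colsub G S \<in> carrier_mat k (card S)" using colsub_carrier[OF G S] .
  have mr: "mrank (colsub G S) = vec_space.rank k (colsub G S)" unfolding mrank_def using CS by simp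
  show le: "mrank (colsub G S) \<le> k" unfolding mr by (rule vec_space.rank_le_dim[OF CS])
  show "mrank (colsub G S) < k \<longleftrightarrow> (\<exists>x\<in>carrier_vec k. x \<noteq> 0\<^sub>v k \<and> (\<forall>j\<in>S. col G j \<bullet> x = 0))"
  proof
    assume "mrank (colsub G S) < k"
    then show "\<exists>x\<in>carrier_vec k. x \<noteq> 0\<^sub>v k \<and> (\<forall>j\<in>S. col G j \<bullet> x = 0)"
      using vec_space.low_rank_orth[OF CS] orth_colsub[OF G S] unfolding mr by blast
  next
    assume "\<exists>x\<in>carrier_vec k. x \<noteq> 0\<^sub>v k \<and> (\<forall>j\<in>S. col G j \<bullet> x = 0)"
    then obtain x where x: "x \<in> carrier_vec k" "x \<noteq> 0\<^sub>v k" "\<forall>j\<in>S. col G j \<bullet> x = 0" by blast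
    have "\<forall>l<card S. col (colsub G S) l \<bullet> x = 0" using orth_colsub[OF G S] x(3) by blast
    then have "mrank (colsub G S) \<noteq> k"
      using vec_space.full_rank_orth[OF CS _ x(1)] x(2) unfolding mr by blast
    then show "mrank (colsub G S) < k" using le by simp
  qed
qed

lemma code_index:
  assumes G: "G \<in> carrier_mat k n" and x: "x \<in> carrier_vec k" and j: "j < n"
  shows "(transpose_mat G *\<^sub>v x) $ j = col G j \<bullet> x"
  using G x j by simp

lemma code_dim:
  assumes G: "G \<in> carrier_mat k n" and c: "c \<in> code G"
  shows "dim_vec c = n"
  using G c unfolding code_def by auto

lemma G_inj:
  assumes G: "G \<in> carrier_mat k n" and r: "mrank G = k" and x: "x \<in> carrier_vec k"
    and o: "\<forall>j<n. col G j \<bullet> x = 0"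
  shows "x = 0\<^sub>v k"
proof -
  have "vec_space.rank k G = k" using r G unfolding mrank_def by simp
  then show ?thesis using vec_space.full_rank_orth[OF G _ x o] by blast
qed

lemma bad_iff:
  assumes G: "G \<in> carrier_mat k n" and r: "mrank G = k" and S: "S \<subseteq> {0..<n}"
  shows "mrank (colsub G S) < k \<longleftrightarrow> (\<exists>c\<in>code G. c \<noteq> 0\<^sub>v n \<and> (\<forall>j\<in>S. c $ j = 0))"
proof
  assume "mrank (colsub G S) < k"
  then obtain x where x: "x \<in> carrier_vec k" "x \<noteq> 0\<^sub>v k" "\<forall>j\<in>S. col G j \<bullet> x = 0"
    using mrank_colsub(2)[OF G S] by blast
  define c where "c = transpose_mat G *\<^sub>v x"
  have cc: "c \<in> code G" unfolding c_def code_def using G x by auto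
  have "c \<noteq> 0\<^sub>v n"
  proof
    assume "c = 0\<^sub>v n"
    then have "\<forall>j<n. col G j \<bullet> x = 0" using code_index[OF G x(1)] unfolding c_def
      by (metis index_zero_vec(1))
    then show False using G_inj[OF G r x(1)] x(2) by blast
  qed
  moreover have "\<forall>j\<in>S. c $ j = 0" using x(3) code_index[OF G x(1)] S unfolding c_def by auto
  ultimately show "\<exists>c\<in>code G. c \<noteq> 0\<^sub>v n \<and> (\<forall>j\<in>S. c $ j = 0)" using cc by blast
next
  assume "\<exists>c\<in>code G. c \<noteq> 0\<^sub>v n \<and> (\<forall>j\<in>S. c $ j = 0)"
  then obtain c where c: "c \<in> code G" "c \<noteq> 0\<^sub>v n" "\<forall>j\<in>S. c $ j = 0" by blast
  obtain x where x: "x \<in> carrier_vec k" "c = transpose_mat G *\<^sub>v x" using c(1) G unfolding code_def by auto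
  have "x \<noteq> 0\<^sub>v k"
  proof
    assume "x = 0\<^sub>v k"
    then have "c = 0\<^sub>v n" using x G by auto
    then show False using c(2) by blast
  qed
  moreover have "\<forall>j\<in>S. col G j \<bullet> x = 0" using c(3) code_index[OF G x(1)] S x(2) by fastforce
  ultimately show "mrank (colsub G S) < k" using mrank_colsub(2)[OF G S] x(1) by blast
qed

lemma hweight_code:
  assumes G: "G \<in> carrier_mat k n" and c: "c \<in> code G"
  shows "hweight c = card {j. j < n \<and> c $ j \<noteq> 0}"
  unfolding hweight_def using code_dim[OF G c] by simp

lemma hweight_pos:
  assumes G: "G \<in> carrier_mat k n" and c: "c \<in> code G" and nz: "c \<noteq> 0\<^sub>v n"
  shows "1 \<le> hweight c"
proof -
  have d: "dim_vec c = n" using code_dim[OF G c] .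
  have "\<exists>j<n. c $ j \<noteq> 0"
  proof (rule ccontr)
    assume "\<not> (\<exists>j<n. c $ j \<noteq> 0)"
    then have "c = 0\<^sub>v n" using d by (intro eq_vecI) auto
    then show False using nz by blast
  qed
  then obtain j where "j < n" "c $ j \<noteq> 0" by blast
  then have "{j. j < n \<and> c $ j \<noteq> 0} \<noteq> {}" by blast
  moreover have "finite {j. j < n \<and> c $ j \<noteq> 0}" by simp
  ultimately have "0 < card {j. j < n \<and> c $ j \<noteq> 0}" using card_gt_0_iff by blast
  then show ?thesis using hweight_code[OF G c] by linarith
qed

lemma Q_iff:
  assumes G: "G \<in> carrier_mat k n" and r: "mrank G = k" and m: "m \<le> n"
  shows "(\<exists>S. S \<subseteq> {0..<n} \<and> card S = n - m \<and> mrank (colsub G S) < k)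
     \<longleftrightarrow> (\<exists>c\<in>code G. c \<noteq> 0\<^sub>v n \<and> hweight c \<le> m)"
proof
  assume "\<exists>S. S \<subseteq> {0..<n} \<and> card S = n - m \<and> mrank (colsub G S) < k"
  then obtain S where S: "S \<subseteq> {0..<n}" "card S = n - m" "mrank (colsub G S) < k" by blast
  then obtain c where c: "c \<in> code G" "c \<noteq> 0\<^sub>v n" "\<forall>j\<in>S. c $ j = 0"
    using bad_iff[OF G r S(1)] by blast
  have "{j. j < n \<and> c $ j \<noteq> 0} \<subseteq> {0..<n} - S" using c(3) by auto
  then have "card {j. j < n \<and> c $ j \<noteq> 0} \<le> card ({0..<n} - S)" by (intro card_mono) auto
  also have "\<dots> = n - (n - m)" using card_Diff_subset[OF _ S(1)] S(1,2) finite_subset by fastforce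
  also have "\<dots> = m" using m by simp
  finally show "\<exists>c\<in>code G. c \<noteq> 0\<^sub>v n \<and> hweight c \<le> m"
    using c hweight_code[OF G c(1)] by auto
next
  assume "\<exists>c\<in>code G. c \<noteq> 0\<^sub>v n \<and> hweight c \<le> m"
  then obtain c where c: "c \<in> code G" "c \<noteq> 0\<^sub>v n" "hweight c \<le> m" by blast
  define T where "T = {j. j < n \<and> c $ j \<noteq> 0}"
  have T: "T \<subseteq> {0..<n}" "card T \<le> m" using c hweight_code[OF G c(1)] unfolding T_def by auto
  obtain T' where T': "T \<subseteq> T'" "T' \<subseteq> {0..<n}" "card T' = m"
    using extend_subset[OF _ T(1) T(2)] m by auto
  define S where "S = {0..<n} - T'"
  have S: "S \<subseteq> {0..<n}" unfolding S_def by auto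
  have cS: "card S = n - m" unfolding S_def using card_Diff_subset[OF _ T'(2)] T'(2,3) finite_subset by fastforce
  have "\<forall>j\<in>S. c $ j = 0" using T'(1) unfolding S_def T_def by auto
  then have "mrank (colsub G S) < k" using bad_iff[OF G r S] c by blast
  then show "\<exists>S. S \<subseteq> {0..<n} \<and> card S = n - m \<and> mrank (colsub G S) < k" using S cS by blast
qed

lemma code_nonzero_exists:
  assumes G: "G \<in> carrier_mat k n" and r: "mrank G = k" and k: "k \<ge> 1"
  shows "\<exists>c\<in>code G. c \<noteq> 0\<^sub>v n"
proof -
  define x :: "bit vec" where "x = unit_vec k 0"
  have x: "x \<in> carrier_vec k" unfolding x_def by simp
  have xnz: "x \<noteq> 0\<^sub>v k"
  proof
    assume "x = 0\<^sub>v k"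
    then have "x $ 0 = 0" using k by simp
    then show False unfolding x_def using k by simp
  qed
  define c where "c = transpose_mat G *\<^sub>v x"
  have cc: "c \<in> code G" unfolding c_def code_def using G x by auto
  have "c \<noteq> 0\<^sub>v n"
  proof
    assume "c = 0\<^sub>v n"
    then have "\<forall>j<n. col G j \<bullet> x = 0" using code_index[OF G x] unfolding c_def
      by (metis index_zero_vec(1))
    then show False using G_inj[OF G r x] xnz by blast
  qed
  then show ?thesis using cc by blast
qed

lemma dmin_props:
  assumes G: "G \<in> carrier_mat k n" and r: "mrank G = k" and k: "k \<ge> 1"
  shows "d \<le> dmin G \<longleftrightarrow> (\<forall>c\<in>code G. c \<noteq> 0\<^sub>v n \<longrightarrow> d \<le> hweight c)"
    and "\<exists>c\<in>code G. c \<noteq> 0\<^sub>v n \<and> hweight c = dmin G"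
proof -
  define W where "W = {hweight c | c. c \<in> code G \<and> c \<noteq> 0\<^sub>v (dim_col G)}"
  have dm: "dmin G = Min W" unfolding dmin_def W_def ..
  have "W \<subseteq> {0..n}"
  proof
    fix w assume "w \<in> W"
    then obtain c where c: "c \<in> code G" "w = hweight c" unfolding W_def by blast
    have "{j. j < n \<and> c $ j \<noteq> 0} \<subseteq> {0..<n}" by auto
    then have "card {j. j < n \<and> c $ j \<noteq> 0} \<le> n" using card_mono[of "{0..<n}"] by fastforce
    then show "w \<in> {0..n}" using c hweight_code[OF G c(1)] by simp
  qed
  then have fW: "finite W" using finite_subset by blast
  have neW: "W \<noteq> {}" using code_nonzero_exists[OF G r k] G unfolding W_def by auto
  show "d \<le> dmin G \<longleftrightarrow> (\<forall>c\<in>code G. c \<noteq> 0\<^sub>v n \<longrightarrow> d \<le> hweight c)"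
    unfolding dm Min_ge_iff[OF fW neW] unfolding W_def using G by auto
  have "Min W \<in> W" using Min_in[OF fW neW] .
  then show "\<exists>c\<in>code G. c \<noteq> 0\<^sub>v n \<and> hweight c = dmin G" unfolding dm unfolding W_def using G by auto
qed

definition DD :: "bit mat \<Rightarrow> nat \<Rightarrow> nat \<Rightarrow> nat \<Rightarrow> nat" where
  "DD G k n g = (\<Sum>S \<in> {S. S \<subseteq> {0..<n} \<and> card S = g}. k - mrank (colsub G S))"

lemma finite_F: "finite {S. S \<subseteq> {0..<(n::nat)} \<and> card S = g}"
  by (rule finite_subset[of _ "Pow {0..<n}"]) auto

lemma info_eq:
  assumes G: "G \<in> carrier_mat k n"
  shows "int (info_fun G g) = int k * int (n choose g) - int (DD G k n g)"
proof -
  let ?F = "{S. S \<subseteq> {0..<n} \<and> card S = g}"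
  have le: "\<forall>S\<in>?F. mrank (colsub G S) \<le> k" using mrank_colsub(1)[OF G] by blast
  have "info_fun G g + DD G k n g = (\<Sum>S\<in>?F. mrank (colsub G S) + (k - mrank (colsub G S)))"
    unfolding info_fun_def DD_def using G by (simp add: sum.distrib)
  also have "\<dots> = (\<Sum>S\<in>?F. k)" using le by (intro sum.cong) auto
  also have "\<dots> = k * (n choose g)" using n_subsets[of "{0..<n}" g] by simp
  finally have "info_fun G g + DD G k n g = k * (n choose g)" .
  then have "int (info_fun G g) + int (DD G k n g) = int k * int (n choose g)" by (metis of_nat_add of_nat_mult)
  then show ?thesis by linarith
qed

lemma DD_zero:
  assumes G: "G \<in> carrier_mat k n"
  shows "DD G k n g = 0 \<longleftrightarrow> \<not> (\<exists>S. S \<subseteq> {0..<n} \<and> card S = g \<and> mrank (colsub G S) < k)"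
proof -
  have le: "\<And>S. S \<subseteq> {0..<n} \<Longrightarrow> mrank (colsub G S) \<le> k" using mrank_colsub(1)[OF G] by blast
  have "DD G k n g = 0 \<longleftrightarrow> (\<forall>S\<in>{S. S \<subseteq> {0..<n} \<and> card S = g}. k - mrank (colsub G S) = 0)"
    unfolding DD_def by (rule sum_eq_0_iff[OF finite_F])
  also have "\<dots> \<longleftrightarrow> (\<forall>S. S \<subseteq> {0..<n} \<and> card S = g \<longrightarrow> \<not> mrank (colsub G S) < k)"
    using le by (auto simp: not_less)
  finally show ?thesis by blast
qed

theorem mainTheorem4:
  fixes G :: "bit mat" and n k :: nat
  assumes "G \<in> carrier_mat k n" and "n \<ge> 2" and "k \<ge> 1" and "mrank G = k"
  shows "(exit_IE G has_real_derivative
            ((real n - 1) * real_of_int (coef_a G 0) - real_of_int (coef_a G 1)) / real n)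
           (at 0 within {0..1})
       \<and> (coef_a G 0 = 0 \<longleftrightarrow> dmin G \<ge> 2)
       \<and> (dmin G \<ge> 2 \<longrightarrow> coef_a G 1 = 2 * int (Delta G) \<and>
           (exit_IE G has_real_derivative (- 2 / real n * real (Delta G))) (at 0 within {0..1}))
       \<and> (dmin G \<ge> 3 \<longrightarrow> coef_a G 1 = 0 \<and> Delta G = 0)
       \<and> (dmin G = 2 \<longrightarrow> Delta G > 0 \<and> coef_a G 1 \<noteq> 0)"
proof -
  note G = assms(1) and n = assms(2) and k = assms(3) and r = assms(4)
  have dc: "dim_col G = n" "dim_row G = k" using G by auto
  define Q where "Q m = (\<exists>c\<in>code G. c \<noteq> 0\<^sub>v n \<and> hweight c \<le> m)" for m
  have DQ: "DD G k n (n - m) = 0 \<longleftrightarrow> \<not> Q m" if "m \<le> n" for m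
    using DD_zero[OF G, of "n - m"] Q_iff[OF G r that] unfolding Q_def by blast
  have Q0: "\<not> Q 0" unfolding Q_def using hweight_pos[OF G] by fastforce
  have D0: "DD G k n n = 0" using DQ[of 0] Q0 by simp
  have dmin2: "2 \<le> dmin G \<longleftrightarrow> \<not> Q 1" unfolding dmin_props(1)[OF G r k] Q_def by auto
  have dmin3: "3 \<le> dmin G \<longleftrightarrow> \<not> Q 2" unfolding dmin_props(1)[OF G r k] Q_def by auto
  have D1: "DD G k n (n - 1) = 0 \<longleftrightarrow> \<not> Q 1" using DQ[of 1] n by simp
  have D2: "DD G k n (n - 2) = 0 \<longleftrightarrow> \<not> Q 2" using DQ[of 2] n by simp
  have Delta_eq: "Delta G = DD G k n (n - 2)" unfolding Delta_def DD_def dc ..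
  have c1: "n choose (n - 1) = n" using n binomial_symmetric[of 1 n] by simp
  have c2: "2 * int (n choose (n - 2)) = int n * (int n - 1)"
  proof -
    have "n choose (n - 2) = n choose 2" using n binomial_symmetric[of 2 n] by simp
    also have "\<dots> = n * (n - 1) div 2" by (rule choose_two)
    finally have cc: "n choose (n - 2) = n * (n - 1) div 2" .
    have ev: "even (n * (n - 1))" by (cases "even n") auto
    have "2 * (n choose (n - 2)) = n * (n - 1)" unfolding cc using ev dvd_mult_div_cancel[of 2 "n * (n - 1)"] by blast
    then have "int (2 * (n choose (n - 2))) = int (n * (n - 1))" by simp
    then show ?thesis using n by (simp add: of_nat_diff)
  qed
  have in0: "int (info_fun G n) = int k" using info_eq[OF G, of n] D0 by simp
  have in1: "int (info_fun G (n - 1)) = int k * int n - int (DD G k n (n - 1))"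
    using info_eq[OF G, of "n - 1"] c1 by simp
  have in2: "int (info_fun G (n - 2)) = int k * int (n choose (n - 2)) - int (DD G k n (n - 2))"
    using info_eq[OF G, of "n - 2"] by simp
  have a0: "coef_a G 0 = int (DD G k n (n - 1))"
    unfolding coef_a_def dc using in0 in1 by (simp add: algebra_simps)
  have a1: "coef_a G 1 = 2 * int (DD G k n (n - 2)) - (int n - 1) * int (DD G k n (n - 1))"
  proof -
    have nn: "int (n - 1) = int n - 1" using n by simp
    have "coef_a G 1 = int (n - 1) * int (info_fun G (n - 1)) - 2 * int (info_fun G (n - 2))"
      unfolding coef_a_def dc by (simp add: diff_diff_add numeral_2_eq_2)
    also have "\<dots> = (int n - 1) * (int k * int n - int (DD G k n (n - 1)))
        - (int k * (2 * int (n choose (n - 2))) - 2 * int (DD G k n (n - 2)))"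
      unfolding nn in1 in2 by (simp add: algebra_simps)
    also have "\<dots> = 2 * int (DD G k n (n - 2)) - (int n - 1) * int (DD G k n (n - 1))"
      unfolding c2 by (simp add: algebra_simps)
    finally show ?thesis .
  qed
  have ex: "exit_IE G = (\<lambda>p. 1 - (1 / real n) *
      (\<Sum>t<n. real_of_int (coef_a G t) * p ^ t * (1 - p) ^ (n - t - 1)))"
    unfolding exit_IE_def dc ..
  have der: "(exit_IE G has_real_derivative
            ((real n - 1) * real_of_int (coef_a G 0) - real_of_int (coef_a G 1)) / real n)
           (at 0 within {0..1})"
    unfolding ex by (rule has_field_derivative_at_within[OF deriv_main[OF n]])
  have p2: "coef_a G 0 = 0 \<longleftrightarrow> dmin G \<ge> 2" using a0 D1 dmin2 by simp
  have p3: "dmin G \<ge> 2 \<longrightarrow> coef_a G 1 = 2 * int (Delta G) \<and>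
           (exit_IE G has_real_derivative (- 2 / real n * real (Delta G))) (at 0 within {0..1})"
  proof
    assume h: "dmin G \<ge> 2"
    then have z: "DD G k n (n - 1) = 0" using D1 dmin2 by simp
    then have e1: "coef_a G 1 = 2 * int (Delta G)" using a1 Delta_eq by simp
    have e0: "coef_a G 0 = 0" using a0 z by simp
    have "((real n - 1) * real_of_int (coef_a G 0) - real_of_int (coef_a G 1)) / real n
        = - 2 / real n * real (Delta G)" unfolding e0 e1 by simp
    then show "coef_a G 1 = 2 * int (Delta G) \<and>
           (exit_IE G has_real_derivative (- 2 / real n * real (Delta G))) (at 0 within {0..1})"
      using der e1 by metis
  qed
  have p4: "dmin G \<ge> 3 \<longrightarrow> coef_a G 1 = 0 \<and> Delta G = 0"
  proof
    assume h: "dmin G \<ge> 3"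
    then have "\<not> Q 2" using dmin3 by simp
    then have z2: "DD G k n (n - 2) = 0" using D2 by simp
    have "2 \<le> dmin G" using h by simp
    then have z1: "DD G k n (n - 1) = 0" using D1 dmin2 by simp
    show "coef_a G 1 = 0 \<and> Delta G = 0" using a1 z1 z2 Delta_eq by simp
  qed
  have p5: "dmin G = 2 \<longrightarrow> Delta G > 0 \<and> coef_a G 1 \<noteq> 0"
  proof
    assume h: "dmin G = 2"
    then have "Q 2" using dmin_props(2)[OF G r k] unfolding Q_def by force
    then have z2: "DD G k n (n - 2) \<noteq> 0" using D2 by simp
    have z1: "DD G k n (n - 1) = 0" using h D1 dmin2 by simp
    show "Delta G > 0 \<and> coef_a G 1 \<noteq> 0" using a1 z1 z2 Delta_eq by simp
  qed
  show ?thesis using der p2 p3 p4 p5 by blast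
qed

end
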